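(* With $T^+_{\mathrm{vl}},S^+_{\mathrm{vl}}$ as in the context, for all real $\gamma>0$, $M$, $a$ one has $$(T^+_{\mathrm{vl}})^2-4S^+_{\mathrm{vl}}=\frac{a^2(M+1)^2}{64\gamma^2(\gamma+1)^2}\,H(\gamma,M),$$ where $$\begin{aligned}H(\gamma,M)={}&(\gamma-1)^2\gamma^2M^6+(-2\gamma^4+4\gamma^3-2\gamma^2)M^5+(-5\gamma^4-2\gamma^3+19\gamma^2-12\gamma)M^4\\&+(20\gamma^4-44\gamma^2+24\gamma)M^3+(-13\gamma^4+26\gamma^3+39\gamma^2-24\gamma+36)M^2\\&+(-42\gamma^4-20\gamma^3-50\gamma^2-72\gamma-72)M+(57\gamma^4+26\gamma^3+53\gamma^2+84\gamma+36).\end{aligned}$$ Moreover $H(\gamma,M)>0$ for all $\gamma\in(1,3)$ and all $M\in[-1,1]$.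
   Context: Define, for real $\gamma,M,a$ with $\gamma>0$, $$T^+_{\mathrm{vl}}=\frac{a}{8\gamma(\gamma+1)}\Bigl[9\gamma(\gamma+1)-(\gamma-1)\gamma M^4+2(2\gamma^2+\gamma-3)M^2+12\gamma(\gamma+1)M+6\Bigr],$$ $$S^+_{\mathrm{vl}}=-\frac{a^2(M+1)^3}{32\gamma(\gamma+1)}\Bigl[-3\gamma^2-14\gamma+4(\gamma-1)\gamma M^2+(-9\gamma^2+10\gamma+3)M-3\Bigr].$$ *)

theory Defs
  imports Complex_Main
begin

definition T_vl :: "real \<Rightarrow> real \<Rightarrow> real \<Rightarrow> real" where
  "T_vl \<gamma> M a = a / (8 * \<gamma> * (\<gamma> + 1)) *
     (9 * \<gamma> * (\<gamma> + 1) - (\<gamma> - 1) * \<gamma> * M ^ 4 + 2 * (2 * \<gamma>^2 + \<gamma> - 3) * M ^ 2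
      + 12 * \<gamma> * (\<gamma> + 1) * M + 6)"

definition S_vl :: "real \<Rightarrow> real \<Rightarrow> real \<Rightarrow> real" where
  "S_vl \<gamma> M a = - (a^2 * (M + 1) ^ 3) / (32 * \<gamma> * (\<gamma> + 1)) *
     (- 3 * \<gamma>^2 - 14 * \<gamma> + 4 * (\<gamma> - 1) * \<gamma> * M ^ 2 + (- 9 * \<gamma>^2 + 10 * \<gamma> + 3) * M - 3)"

definition H_vl :: "real \<Rightarrow> real \<Rightarrow> real" where
  "H_vl \<gamma> M =
     (\<gamma> - 1)^2 * \<gamma>^2 * M^6
   + (- 2 * \<gamma>^4 + 4 * \<gamma>^3 - 2 * \<gamma>^2) * M^5
   + (- 5 * \<gamma>^4 - 2 * \<gamma>^3 + 19 * \<gamma>^2 - 12 * \<gamma>) * M^4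
   + (20 * \<gamma>^4 - 44 * \<gamma>^2 + 24 * \<gamma>) * M^3
   + (- 13 * \<gamma>^4 + 26 * \<gamma>^3 + 39 * \<gamma>^2 - 24 * \<gamma> + 36) * M^2
   + (- 42 * \<gamma>^4 - 20 * \<gamma>^3 - 50 * \<gamma>^2 - 72 * \<gamma> - 72) * M
   + (57 * \<gamma>^4 + 26 * \<gamma>^3 + 53 * \<gamma>^2 + 84 * \<gamma> + 36)"

end

theory Submission
  imports Defs
begin

definition PP :: "real \<Rightarrow> real \<Rightarrow> real \<Rightarrow> real \<Rightarrow> real" where
  "PP x u y v = 256 * x^0 * u^4 * y^1 * v^5 + 1536 * x^0 * u^4 * y^2 * v^4 + 3584 * x^0 * u^4 * y^3 * v^3 + 4096 * x^0 * u^4 * y^4 * v^2 + 2304 * x^0 * u^4 * y^5 * v^1 + 512 * x^0 * u^4 * y^6 * v^0 + 384 * x^1 * u^3 * y^0 * v^6 + 4096 * x^1 * u^3 * y^1 * v^5 + 16768 * x^1 * u^3 * y^2 * v^4 + 33536 * x^1 * u^3 * y^3 * v^3 + 35200 * x^1 * u^3 * y^4 * v^2 + 18688 * x^1 * u^3 * y^5 * v^1 + 3968 * x^1 * u^3 * y^6 * v^0 + 1984 * x^2 * u^2 * y^0 * v^6 + 16768 * x^2 * u^2 * y^1 * v^5 + 61248 * x^2 * u^2 * y^2 * v^4 + 115968 * x^2 * u^2 * y^3 * v^3 + 117568 * x^2 * u^2 * y^4 * v^2 + 59776 * x^2 * u^2 * y^5 * v^1 + 11968 * x^2 * u^2 *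 y^6 * v^0 + 3584 * x^3 * u^1 * y^0 * v^6 + 28416 * x^3 * u^1 * y^1 * v^5 + 99840 * x^3 * u^1 * y^2 * v^4 + 186112 * x^3 * u^1 * y^3 * v^3 + 186624 * x^3 * u^1 * y^4 * v^2 + 90624 * x^3 * u^1 * y^5 * v^1 + 16640 * x^3 * u^1 * y^6 * v^0 + 2240 * x^4 * u^0 * y^0 * v^6 + 18048 * x^4 * u^0 * y^1 * v^5 + 63552 * x^4 * u^0 * y^2 * v^4 + 118528 * x^4 * u^0 * y^3 * v^3 + 118848 * x^4 * u^0 * y^4 * v^2 + 54912 * x^4 * u^0 * y^5 * v^1 + 9152 * x^4 * u^0 * y^6 * v^0"

lemma PP_nonneg: "0 \<le> x \<Longrightarrow> 0 \<le> u \<Longrightarrow> 0 \<le> y \<Longrightarrow> 0 \<le> v \<Longrightarrow> 0 \<le> PP x u y v"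
  unfolding PP_def by (intro add_nonneg_nonneg mult_nonneg_nonneg zero_le_power; simp)

lemma H_eq: "H_vl g M = 64 + PP ((g-1)/2) ((3-g)/2) ((1-M)/2) ((1+M)/2)"
  unfolding H_vl_def PP_def by (simp add: field_simps power_def; algebra)

lemma part1:
  assumes "(g::real) > 0"
  shows "(T_vl g M a)^2 - 4 * S_vl g M a
             = a^2 * (M + 1)^2 / (64 * g^2 * (g + 1)^2) * H_vl g M"
proof -
  define D where "D = 8 * g * (g + 1)"
  define P where "P = (9 * g * (g + 1) - (g - 1) * g * M ^ 4 + 2 * (2 * g^2 + g - 3) * M ^ 2
      + 12 * g * (g + 1) * M + 6)"
  define Q where "Q = (- 3 * g^2 - 14 * g + 4 * (g - 1) * g * M ^ 2 + (- 9 * g^2 + 10 * g + 3) * M - 3)"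
  have D0: "D \<noteq> 0" using assms unfolding D_def by simp
  have T: "T_vl g M a = a / D * P" unfolding T_vl_def D_def P_def by simp
  have S: "S_vl g M a = - (a^2 * (M + 1) ^ 3) / (4 * D) * Q" unfolding S_vl_def D_def Q_def by simp
  have R: "a^2 * (M + 1)^2 / (64 * g^2 * (g + 1)^2) = a^2 * (M + 1)^2 / D^2"
    unfolding D_def by (simp add: power2_eq_square algebra_simps)
  have key: "P^2 + (M+1)^3 * Q * D = (M+1)^2 * H_vl g M"
    unfolding P_def Q_def D_def H_vl_def by algebra
  have "(T_vl g M a)^2 - 4 * S_vl g M a = a^2 / D^2 * (P^2 + (M+1)^3 * Q * D)"
    unfolding T S using D0 by (simp add: field_simps power2_eq_square)
  also have "... = a^2 * (M + 1)^2 / D^2 * H_vl g M" unfolding key by simp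
  finally show ?thesis unfolding R .
qed

theorem mainTheorem6:
  shows "(\<forall>\<gamma> M a :: real. \<gamma> > 0 \<longrightarrow>
           (T_vl \<gamma> M a)^2 - 4 * S_vl \<gamma> M a
             = a^2 * (M + 1)^2 / (64 * \<gamma>^2 * (\<gamma> + 1)^2) * H_vl \<gamma> M)
       \<and> (\<forall>\<gamma> M :: real. 1 < \<gamma> \<and> \<gamma> < 3 \<and> -1 \<le> M \<and> M \<le> 1 \<longrightarrow> H_vl \<gamma> M > 0)"
proof (intro conjI allI impI)
  fix g M a :: real assume "g > 0"
  then show "(T_vl g M a)^2 - 4 * S_vl g M a
             = a^2 * (M + 1)^2 / (64 * g^2 * (g + 1)^2) * H_vl g M" by (rule part1)
next
  fix g M :: real assume h: "1 < g \<and> g < 3 \<and> -1 \<le> M \<and> M \<le> 1"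
  have "0 \<le> PP ((g-1)/2) ((3-g)/2) ((1-M)/2) ((1+M)/2)"
    using h by (intro PP_nonneg) auto
  then show "H_vl g M > 0" unfolding H_eq by simp
qed

end
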